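(* If $f\in\mathcal F_{\mathrm{CSSA}}$ (with witnesses $Y_\ell,p_\ell,r_\ell,C_\ell,f_\ell,F_\ell,D_\ell$ as in the definition), then $f\log_+f\in\mathcal L^1(\mathbb{R}^d)$; more precisely $$\int_{\mathbb{R}^d}f(y)\log_+f(y)\,\mathrm{d}y\le\sum_{\ell:p_\ell>0}p_\ell\int_{Y_\ell}D_\ell(y)\,\mathrm{d}F_\ell(y)+d\sum_{\ell:p_\ell>0}p_\ell\log_+\!\Big(\frac{2}{r_\ell}\Big)<\infty.$$
   Context: $\log_+t=\max\{\log t,0\}$ for $t>0$, $\log_+0=0$. Densities are w.r.t. Lebesgue measure; $F(A)=\int_Af\,\mathrm{d}x$; $\operatorname{supp}(f)=\{x:f(x)>0\}$. Comparison cubes are closed axis-aligned cubes; partition cubes may be half-open so as to be disjoint. "A cube of side $r$ with a vertex at $y$" means a closed axis-aligned cube of side length $r$ having $y$ as one of its vertices. A family of cubes of common side length is adjacent if they have pairwise disjoint interiors and the union of their closures is connected. Definition ($\mathcal F_{\mathrm{FSSA}}$): a density $f$ on $\mathbb{R}^d$ belongs to $\mathcal F_{\mathrm{FSSA}}$ if there exist, for each $m\ge1$, a partition $\operatorname{supp}(f)=A^{(m)}_0\sqcup A^{(m)}_1\sqcup\cdots\sqcup A^{(m)}_m$ in which $A^{(m)}_1,\dots,A^{(m)}_m$ are adjacent cubes of common side length $h_m>0$ and $A^{(m)}_0$ is the remainder, such that: (i) $f$ is continuous on $\operatorname{supp}(f)$ except on a set of $F$-measure zero; (ii) there exist $r>0$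 and, for every $y\in\operatorname{supp}(f)$, a comparison cube $C(r,y)$ of side length $r$ containing $y$, such that $D_r(y)=\log\big(f(y)/\inf_{z\in C(r,y)}f(z)\big)$ is measurable on $\operatorname{supp}(f)$ and $\int_{\operatorname{supp}(f)}D_r\,\mathrm{d}F<\infty$; (iii) there exists $M\in\mathbb N$ such that for every $m\ge M$: (a) if $y\in A^{(m)}_0$ then $C(r,y)\cap A^{(m)}_0$ contains a cube of side $r/2$ with a vertex at $y$; (b) if $y\in\operatorname{supp}(f)\setminus A^{(m)}_0$ then $C(r,y)\cap(\operatorname{supp}(f)\setminus A^{(m)}_0)$ contains a cube of side $r/2$ with a vertex at $y$. Definition ($\mathcal F_{\mathrm{CSSA}}$): a density $f$ belongs to $\mathcal F_{\mathrm{CSSA}}$ if there exist a measurable partition $\operatorname{supp}(f)=\bigsqcup_{\ell\ge1}Y_\ell$ with $p_\ell=F(Y_\ell)$, and, for each $\ell$ with $p_\ell>0$, a scale $r_\ell>0$, comparison cubes $C_\ell(y)$ of side $r_\ell$ containing $y$ ($y\in Y_\ell$), and for every $m\ge1$ a partition $Y_\ell=A^{(m)}_{\ell,0}\sqcup\cdots\sqcup A^{(m)}_{\ell,m}$ with $A^{(m)}_{\ell,1},\dots,A^{(m)}_{\ell,m}$ adjacent cubes of common side $h_{\ell,m}>0$, such that for each $\ell$ with $p_\ell>0$ the normalized restriction $f_\ell=f\mathbf 1_{Y_\ell}/p_\ell$ satisfies the definition of $\mathcal F_{\mathrm{FSSA}}$ with these witnesses (scale $r_\ell$, cubes $C_\ell(y)$,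 these partitions), and, with $F_\ell$ the law of density $f_\ell$ and $D_\ell(y)=\log\big(f_\ell(y)/\inf_{z\in C_\ell(y)}f_\ell(z)\big)$ for $y\in Y_\ell$, one has $\sum_{\ell:p_\ell>0}p_\ell\int_{Y_\ell}D_\ell\,\mathrm{d}F_\ell<\infty$ and $\sum_{\ell:p_\ell>0}p_\ell\log_+(1/r_\ell)<\infty$. *)

theory Defs
  imports "HOL-Analysis.Analysis"
begin

text \<open>Ambient space: real ^ 'd, so d = CARD('d). Lebesgue measure is lebesgue.\<close>

definition logp :: "real \<Rightarrow> real" where
  "logp t = (if t > 0 then max (ln t) 0 else 0)"

definition is_density :: "(real ^ 'd \<Rightarrow> real) \<Rightarrow> bool" where
  "is_density f \<longleftrightarrow> f \<in> borel_measurable lebesgue \<and> (\<forall>x. 0 \<le> f x)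
     \<and> (\<integral>\<^sup>+ x. ennreal (f x) \<partial>lebesgue) = 1"

definition supp :: "(real ^ 'd \<Rightarrow> real) \<Rightarrow> (real ^ 'd) set" where
  "supp f = {x. f x > 0}"

definition lawF :: "(real ^ 'd \<Rightarrow> real) \<Rightarrow> (real ^ 'd) measure" where
  "lawF f = density lebesgue (\<lambda>x. ennreal (f x))"

definition closed_cube :: "real ^ 'd \<Rightarrow> real \<Rightarrow> (real ^ 'd) set" where
  "closed_cube a s = {x. \<forall>i. a $ i \<le> x $ i \<and> x $ i \<le> a $ i + s}"

definition open_cube :: "real ^ 'd \<Rightarrow> real \<Rightarrow> (real ^ 'd) set" where
  "open_cube a s = {x. \<forall>i. a $ i < x $ i \<and> x $ i < a $ i + s}"

definition is_closed_cube :: "(real ^ 'd) set \<Rightarrow> real \<Rightarrow> bool" where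
  "is_closed_cube C s \<longleftrightarrow> (\<exists>a. C = closed_cube a s)"

text \<open>Partition cube of side s: an axis-aligned cube of side s, possibly with
  part of its boundary removed (e.g. half-open).\<close>
definition partition_cube :: "(real ^ 'd) set \<Rightarrow> real \<Rightarrow> bool" where
  "partition_cube Q s \<longleftrightarrow> (\<exists>a. open_cube a s \<subseteq> Q \<and> Q \<subseteq> closed_cube a s)"

definition cube_with_vertex :: "(real ^ 'd) set \<Rightarrow> real \<Rightarrow> real ^ 'd \<Rightarrow> bool" where
  "cube_with_vertex Q s y \<longleftrightarrow>
     (\<exists>a. Q = closed_cube a s \<and> (\<forall>i. y $ i = a $ i \<or> y $ i = a $ i + s))"

definition adjacent :: "'i set \<Rightarrow> ('i \<Rightarrow> (real ^ 'd) set) \<Rightarrow> bool" where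
  "adjacent I A \<longleftrightarrow>
     (\<forall>i\<in>I. \<forall>j\<in>I. i \<noteq> j \<longrightarrow> interior (A i) \<inter> interior (A j) = {})
     \<and> connected (\<Union>i\<in>I. closure (A i))"

definition Dfun :: "(real ^ 'd \<Rightarrow> real) \<Rightarrow> (real ^ 'd \<Rightarrow> (real ^ 'd) set) \<Rightarrow> real ^ 'd \<Rightarrow> ennreal" where
  "Dfun f C y = (if Inf (f ` C y) > 0 then ennreal (ln (f y / Inf (f ` C y))) else \<infinity>)"

text \<open>The definition of F_FSSA, with explicit witnesses: scale r, comparison cubes C,
  partitions A m 0, ..., A m m (A m 0 the remainder) with cube side h m.\<close>
definition FSSA_wit ::
  "(real ^ 'd \<Rightarrow> real) \<Rightarrow> real \<Rightarrow> (real ^ 'd \<Rightarrow> (real ^ 'd) set)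
     \<Rightarrow> (nat \<Rightarrow> nat \<Rightarrow> (real ^ 'd) set) \<Rightarrow> (nat \<Rightarrow> real) \<Rightarrow> bool" where
  "FSSA_wit f r C A h \<longleftrightarrow>
     \<comment> \<open>partitions\<close>
     (\<forall>m\<ge>1. 0 < h m
        \<and> (\<forall>i\<in>{1..m}. partition_cube (A m i) (h m))
        \<and> adjacent {1..m} (A m)
        \<and> disjoint_family_on (A m) {0..m}
        \<and> (\<Union>i\<in>{0..m}. A m i) = supp f)
     \<comment> \<open>(i)\<close>
   \<and> (\<exists>N. N \<in> null_sets (lawF f) \<and>
          (\<forall>x \<in> supp f - N. continuous (at x within supp f) f))
     \<comment> \<open>(ii)\<close>
   \<and> 0 < r
   \<and> (\<forall>y\<in>supp f. is_closed_cube (C y) r \<and> y \<in> C y)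
   \<and> (\<lambda>y. Dfun f C y * indicator (supp f) y) \<in> borel_measurable lebesgue
   \<and> (\<integral>\<^sup>+ y. Dfun f C y * indicator (supp f) y \<partial>lawF f) < \<infinity>
     \<comment> \<open>(iii)\<close>
   \<and> (\<exists>M::nat. \<forall>m\<ge>M.
        (\<forall>y\<in>A m 0. \<exists>Q. cube_with_vertex Q (r/2) y \<and> Q \<subseteq> C y \<inter> A m 0)
      \<and> (\<forall>y\<in>supp f - A m 0. \<exists>Q. cube_with_vertex Q (r/2) y \<and> Q \<subseteq> C y \<inter> (supp f - A m 0)))"

definition FSSA :: "(real ^ 'd \<Rightarrow> real) set" where
  "FSSA = {f. is_density f \<and> (\<exists>r C A h. FSSA_wit f r C A h)}"

definition pY :: "(real ^ 'd \<Rightarrow> real) \<Rightarrow> (real ^ 'd) set \<Rightarrow> real" where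
  "pY f Y = measure (lawF f) Y"

definition frestr :: "(real ^ 'd \<Rightarrow> real) \<Rightarrow> (real ^ 'd) set \<Rightarrow> real ^ 'd \<Rightarrow> real" where
  "frestr f Y = (\<lambda>x. f x * indicator Y x / pY f Y)"

definition CSSA_wit ::
  "(real ^ 'd \<Rightarrow> real) \<Rightarrow> (nat \<Rightarrow> (real ^ 'd) set) \<Rightarrow> (nat \<Rightarrow> real)
     \<Rightarrow> (nat \<Rightarrow> real ^ 'd \<Rightarrow> (real ^ 'd) set)
     \<Rightarrow> (nat \<Rightarrow> nat \<Rightarrow> nat \<Rightarrow> (real ^ 'd) set) \<Rightarrow> (nat \<Rightarrow> nat \<Rightarrow> real) \<Rightarrow> bool" where
  "CSSA_wit f Y r C A h \<longleftrightarrow>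
     (\<forall>l\<ge>1. Y l \<in> sets lebesgue)
   \<and> disjoint_family_on Y {1..}
   \<and> (\<Union>l\<in>{1..}. Y l) = supp f
   \<and> (\<forall>l\<ge>1. pY f (Y l) > 0 \<longrightarrow> FSSA_wit (frestr f (Y l)) (r l) (C l) (A l) (h l))
   \<and> (\<Sum>l. if 1 \<le> l \<and> pY f (Y l) > 0 then
            ennreal (pY f (Y l)) *
              (\<integral>\<^sup>+ y. Dfun (frestr f (Y l)) (C l) y * indicator (Y l) y \<partial>lawF (frestr f (Y l)))
          else 0) < \<infinity>
   \<and> (\<Sum>l. if 1 \<le> l \<and> pY f (Y l) > 0 then ennreal (pY f (Y l) * logp (1 / r l)) else 0) < \<infinity>"

definition CSSA :: "(real ^ 'd \<Rightarrow> real) set" where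
  "CSSA = {f. is_density f \<and> (\<exists>Y r C A h. CSSA_wit f Y r C A h)}"

end

theory Submission
  imports Defs
begin

lemma cube_vol:
  fixes a :: "real ^ 'd"
  assumes "0 \<le> s"
  shows "emeasure lebesgue (closed_cube a s) = ennreal (s ^ CARD('d))"
proof -
  have eq: "closed_cube a s = cbox a (\<chi> i. a $ i + s)"
    by (auto simp: closed_cube_def mem_box_cart)
  have ne: "cbox a (\<chi> i. a $ i + s) \<noteq> {}"
  proof -
    have "a \<in> cbox a (\<chi> i. a $ i + s)" using assms by (simp add: mem_box_cart)
    then show ?thesis by blast
  qed
  have "emeasure lebesgue (cbox a (\<chi> i. a $ i + s)) = emeasure lborel (cbox a (\<chi> i. a $ i + s))"
    by simp
  also have "\<dots> = ennreal (measure lborel (cbox a (\<chi> i. a $ i + s)))"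
    by (intro emeasure_eq_ennreal_measure) (use emeasure_lborel_cbox_finite in \<open>simp add: less_top\<close>)
  also have "measure lborel (cbox a (\<chi> i. a $ i + s)) = s ^ CARD('d)"
    using content_cbox_cart[OF ne] by simp
  finally show ?thesis using eq by simp
qed

lemma logp_meas[measurable]: "logp \<in> borel_measurable borel"
  unfolding logp_def by measurable

lemma closed_cube_cbox: "closed_cube a s = cbox a (\<chi> i. a $ i + s)"
  by (auto simp: closed_cube_def mem_box_cart)

lemma closed_cube_sets[measurable]: "closed_cube a s \<in> sets lebesgue"
  unfolding closed_cube_cbox by simp

lemma dens_facts:
  assumes "is_density f"
  shows "f \<in> borel_measurable lebesgue" "\<And>x. 0 \<le> f x" "(\<integral>\<^sup>+ x. ennreal (f x) \<partial>lebesgue) = 1"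
  using assms by (auto simp: is_density_def)

lemma emeasure_lawF:
  assumes "is_density f" and Y: "Y \<in> sets lebesgue"
  shows "emeasure (lawF f) Y = ennreal (pY f Y)" "pY f Y \<le> 1" "0 \<le> pY f Y"
proof -
  note df = dens_facts[OF assms(1)]
  have e: "emeasure (lawF f) Y = (\<integral>\<^sup>+ x. ennreal (f x) * indicator Y x \<partial>lebesgue)"
    unfolding lawF_def using df Y by (simp add: emeasure_density)
  also have "\<dots> \<le> (\<integral>\<^sup>+ x. ennreal (f x) \<partial>lebesgue)"
    by (intro nn_integral_mono) (auto split: split_indicator)
  finally have le1: "emeasure (lawF f) Y \<le> 1" using df by simp
  have "emeasure (lawF f) Y < top" using le1 ennreal_one_less_top by (rule le_less_trans)
  then have "emeasure (lawF f) Y \<noteq> top" by (rule less_imp_neq)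
  then show E: "emeasure (lawF f) Y = ennreal (pY f Y)"
    unfolding pY_def by (rule emeasure_eq_ennreal_measure)
  show "pY f Y \<le> 1" using le1 E
    by (metis ennreal_le_1)
  show "0 \<le> pY f Y" by (simp add: pY_def)
qed

lemma real_ineq:
  fixes p fl m r D L fy :: real and d :: nat
  assumes pp: "0 < p" and p1: "p \<le> 1" and fl0: "0 < fl" and fyd: "fy = p * fl" and m0: "0 < m"
    and mfl: "m \<le> fl" and r0: "0 < r" and mr: "m * r ^ d \<le> 1"
    and Dd: "D = ln (fl / m)" and Ld: "L = logp (2 / r)"
  shows "logp fy \<le> D + real d * L" "0 \<le> D" "0 \<le> L"
proof -
  have "1 \<le> fl / m" using m0 mfl by simp
  then show D0: "0 \<le> D" unfolding Dd by simp
  show L0: "0 \<le> L" unfolding Ld logp_def by simp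
  have fy: "0 < fy" unfolding fyd using pp fl0 by simp
  have "ln fy = ln p + ln fl" unfolding fyd using pp fl0 by (simp add: ln_mult)
  also have "ln p \<le> 0" using pp p1 by simp
  finally have a: "ln fy \<le> ln fl" by simp
  have "ln (m * r ^ d) \<le> 0" using mr m0 r0 by simp
  moreover have "ln (m * r ^ d) = ln m + real d * ln r" using m0 r0 by (simp add: ln_mult ln_realpow)
  ultimately have b: "ln m + real d * ln r \<le> 0" by simp
  have c: "D = ln fl - ln m" unfolding Dd using fl0 m0 by (simp add: ln_div)
  have "ln (1 / r) \<le> ln (2 / r)" using r0 by (simp add: divide_right_mono)
  also have "ln (2 / r) \<le> L" unfolding Ld logp_def using r0 by simp
  finally have "ln (1 / r) \<le> L" .
  moreover have "ln (1 / r) = - ln r" using r0 by (simp add: ln_div)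
  ultimately have "- ln r \<le> L" by simp
  then have "real d * (- ln r) \<le> real d * L" by (intro mult_left_mono) auto
  then have e: "ln fy \<le> D + real d * L" using a b c by (simp add: algebra_simps)
  have "logp fy = max (ln fy) 0" using fy unfolding logp_def by (simp only: if_True)
  moreover have "0 \<le> D + real d * L" using D0 L0 by simp
  ultimately show "logp fy \<le> D + real d * L" using e by linarith
qed

lemma point_lemma:
  fixes f fl :: "real ^ 'd \<Rightarrow> real" and Cy :: "(real ^ 'd) set"
  assumes pp: "0 < p" and p1: "p \<le> 1" and fl0: "\<And>x. 0 \<le> fl x"
    and int_fl: "(\<integral>\<^sup>+ x. ennreal (fl x) \<partial>lebesgue) = 1"
    and Ca: "Cy = closed_cube a r" and yC: "y \<in> Cy" and r0: "0 < r"
    and fy: "0 < f y" and fpos: "f y = p * fl y"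
    and flm: "fl \<in> borel_measurable lebesgue"
  shows "ennreal (f y * logp (f y)) \<le> ennreal (f y) * ((if Inf (fl ` Cy) > 0 then ennreal (ln (fl y / Inf (fl ` Cy))) else \<infinity>) + of_nat CARD('d) * ennreal (logp (2 / r)))"
proof -
  define m where "m = Inf (fl ` Cy)"
  define L where "L = logp (2 / r)"
  show ?thesis
  proof (cases "m > 0")
    case False
    have h17: "ennreal (f y) * (\<infinity> + of_nat CARD('d) * ennreal L) = \<infinity>"
    proof -
      have nz: "ennreal (f y) \<noteq> 0" using fy by simp
      have "ennreal (f y) * (top + of_nat CARD('d) * ennreal L) = top"
        unfolding add_top_left_ennreal ennreal_mult_top using nz by (simp only: if_False)
      then show ?thesis unfolding infinity_ennreal_def .
    qed
    have e: "(if Inf (fl ` Cy) > 0 then ennreal (ln (fl y / Inf (fl ` Cy))) else \<infinity>) = \<infinity>"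
      using False unfolding m_def by (simp only: if_False)
    have h: "ennreal (f y * logp (f y)) \<le> \<infinity>" unfolding infinity_ennreal_def by (rule top_greatest)
    show ?thesis unfolding L_def[symmetric] e h17 by (rule h)
  next
    case True
    have bdd: "bdd_below (fl ` Cy)" by (intro bdd_belowI[of _ 0]) (auto simp: fl0)
    have mle: "z \<in> Cy \<Longrightarrow> m \<le> fl z" for z unfolding m_def using bdd by (auto intro: cInf_lower)
    have "(\<integral>\<^sup>+ z. ennreal m * indicator Cy z \<partial>lebesgue) \<le> (\<integral>\<^sup>+ z. ennreal (fl z) \<partial>lebesgue)"
      using mle by (intro nn_integral_mono) (auto split: split_indicator intro: ennreal_leI)
    also have "(\<integral>\<^sup>+ z. ennreal m * indicator Cy z \<partial>lebesgue) = ennreal m * emeasure lebesgue Cy"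
      using Ca by (intro nn_integral_cmult_indicator) simp
    also have "emeasure lebesgue Cy = ennreal (r ^ CARD('d))"
      using Ca cube_vol[of r a] r0 by simp
    finally have "ennreal m * ennreal (r ^ CARD('d)) \<le> 1" using int_fl by simp
    then have mr: "m * r ^ CARD('d) \<le> 1"
      using True r0 by (simp flip: ennreal_mult)
    have flpos: "0 < fl y" using fy fpos pp by (simp add: zero_less_mult_iff)
    have ri: "logp (f y) \<le> ln (fl y / m) + real CARD('d) * L" "0 \<le> ln (fl y / m)" "0 \<le> L"
      using real_ineq[OF pp p1 flpos fpos True mle[OF yC] r0 mr refl, of L] L_def by auto
    have "f y * logp (f y) \<le> f y * (ln (fl y / m) + real CARD('d) * L)"
      using ri fy by (intro mult_left_mono) auto
    then have "ennreal (f y * logp (f y)) \<le> ennreal (f y * (ln (fl y / m) + real CARD('d) * L))"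
      by (rule ennreal_leI)
    also have "ennreal (f y * (ln (fl y / m) + real CARD('d) * L))
        = ennreal (f y) * (ennreal (ln (fl y / m)) + of_nat CARD('d) * ennreal L)"
    proof -
      have "ennreal (f y * (ln (fl y / m) + real CARD('d) * L)) = ennreal (f y) * ennreal (ln (fl y / m) + real CARD('d) * L)"
        using fy ri by (intro ennreal_mult) auto
      also have "ennreal (ln (fl y / m) + real CARD('d) * L) = ennreal (ln (fl y / m)) + ennreal (real CARD('d) * L)"
        using ri by (intro ennreal_plus) auto
      also have "ennreal (real CARD('d) * L) = ennreal (real CARD('d)) * ennreal L"
        using ri by (intro ennreal_mult) auto
      also have "ennreal (real CARD('d)) = of_nat CARD('d)"
        by (rule ennreal_of_nat_eq_real_of_nat[symmetric])
      finally show ?thesis .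
    qed
    finally have fin: "ennreal (f y * logp (f y)) \<le> ennreal (f y) * (ennreal (ln (fl y / m)) + of_nat CARD('d) * ennreal L)" .
    have e2: "(if Inf (fl ` Cy) > 0 then ennreal (ln (fl y / Inf (fl ` Cy))) else \<infinity>) = ennreal (ln (fl y / m))"
      using True unfolding m_def by (simp only: if_True)
    show ?thesis unfolding L_def[symmetric] e2 by (rule fin)
  qed
qed

lemma piece:
  fixes f :: "real ^ 'd \<Rightarrow> real"
  assumes dens: "is_density f" and Ym[measurable]: "Y \<in> sets lebesgue" and Ysub: "Y \<subseteq> supp f"
    and ppos: "pY f Y > 0" and W: "FSSA_wit (frestr f Y) r C A h"
  shows "(\<integral>\<^sup>+ y. ennreal (f y * logp (f y)) * indicator Y y \<partial>lebesgue)
    \<le> ennreal (pY f Y) * ((\<integral>\<^sup>+ y. Dfun (frestr f Y) C y * indicator Y y \<partial>lawF (frestr f Y))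
        + of_nat CARD('d) * ennreal (logp (2 / r)))"
proof -
  note df = dens_facts[OF dens]
  note fm[measurable] = df(1)
  define p where "p = pY f Y"
  define fl where "fl = frestr f Y"
  define L where "L = logp (2 / r)"
  have p1: "p \<le> 1" and pp: "0 < p" using emeasure_lawF[OF dens Ym] ppos by (auto simp: p_def)
  have Ep: "emeasure (lawF f) Y = ennreal p" using emeasure_lawF[OF dens Ym] by (simp add: p_def)
  have fl_eq: "fl x = f x * indicator Y x / p" for x by (simp add: fl_def frestr_def p_def)
  have fl0: "0 \<le> fl x" for x using df(2)[of x] pp by (simp add: fl_eq)
  have flm[measurable]: "fl \<in> borel_measurable lebesgue" unfolding fl_eq by measurable
  have suppfl: "supp fl = Y"
    using Ysub pp df(2) by (auto simp: supp_def fl_eq split: split_indicator)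
  have fpos: "y \<in> Y \<Longrightarrow> f y = p * fl y" for y using pp by (simp add: fl_eq)
  have int_fl: "(\<integral>\<^sup>+ x. ennreal (fl x) \<partial>lebesgue) = 1"
  proof -
    have "(\<integral>\<^sup>+ x. ennreal (fl x) \<partial>lebesgue) = (\<integral>\<^sup>+ x. (ennreal (f x) * indicator Y x) * ennreal (1 / p) \<partial>lebesgue)"
      using pp df(2) by (intro nn_integral_cong) (auto simp: fl_eq ennreal_mult[symmetric] split: split_indicator)
    also have "\<dots> = (\<integral>\<^sup>+ x. ennreal (f x) * indicator Y x \<partial>lebesgue) * ennreal (1 / p)"
      by (rule nn_integral_multc) measurable
    also have "(\<integral>\<^sup>+ x. ennreal (f x) * indicator Y x \<partial>lebesgue) = ennreal p"
      using Ep unfolding lawF_def by (simp add: emeasure_density)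
    also have "ennreal p * ennreal (1 / p) = 1" using pp by (simp flip: ennreal_mult)
    finally show ?thesis .
  qed
  have W': "0 < r" "\<And>y. y \<in> Y \<Longrightarrow> is_closed_cube (C y) r \<and> y \<in> C y"
    "(\<lambda>y. Dfun fl C y * indicator Y y) \<in> borel_measurable lebesgue"
  proof -
    have Wc: "0 < r \<and> (\<forall>y\<in>supp fl. is_closed_cube (C y) r \<and> y \<in> C y)
      \<and> (\<lambda>y. Dfun fl C y * indicator (supp fl) y) \<in> borel_measurable lebesgue"
      using W unfolding FSSA_wit_def fl_def by blast
    then show "0 < r" "\<And>y. y \<in> Y \<Longrightarrow> is_closed_cube (C y) r \<and> y \<in> C y"
      "(\<lambda>y. Dfun fl C y * indicator Y y) \<in> borel_measurable lebesgue"
      using suppfl by auto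
  qed
  have point: "ennreal (f y * logp (f y)) \<le> ennreal (f y) * (Dfun fl C y + of_nat CARD('d) * ennreal L)"
    if yY: "y \<in> Y" for y
  proof -
    obtain a where Ca: "C y = closed_cube a r" and yC: "y \<in> C y"
      using W'(2)[OF yY] by (auto simp: is_closed_cube_def)
    have fy: "0 < f y" using Ysub yY by (auto simp: supp_def)
    show ?thesis unfolding Dfun_def L_def
      by (rule point_lemma[where f=f and fl=fl and y=y, OF pp p1 fl0 int_fl Ca yC W'(1) fy fpos[OF yY] flm])
  qed
  define g where "g y = Dfun fl C y * indicator Y y + of_nat CARD('d) * ennreal L * indicator Y y" for y
  have gm[measurable]: "g \<in> borel_measurable lebesgue" unfolding g_def using W'(3) by measurable
  have "(\<integral>\<^sup>+ y. ennreal (f y * logp (f y)) * indicator Y y \<partial>lebesgue)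
      \<le> (\<integral>\<^sup>+ y. ennreal p * (ennreal (fl y) * g y) \<partial>lebesgue)"
  proof (intro nn_integral_mono)
    fix y
    show "ennreal (f y * logp (f y)) * indicator Y y \<le> ennreal p * (ennreal (fl y) * g y)"
    proof (cases "y \<in> Y")
      case True
      have "ennreal p * (ennreal (fl y) * g y) = ennreal (f y) * (Dfun fl C y + of_nat CARD('d) * ennreal L)"
        using True pp fl0[of y] fpos[OF True]
        by (simp add: g_def ennreal_mult distrib_left mult.assoc)
      then show ?thesis using point[OF True] True by simp
    qed simp
  qed
  also have "\<dots> = ennreal p * (\<integral>\<^sup>+ y. ennreal (fl y) * g y \<partial>lebesgue)"
    by (rule nn_integral_cmult) measurable
  also have "(\<integral>\<^sup>+ y. ennreal (fl y) * g y \<partial>lebesgue) = (\<integral>\<^sup>+ y. g y \<partial>lawF fl)"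
    unfolding lawF_def by (rule nn_integral_density[symmetric]) measurable
  also have "\<dots> = (\<integral>\<^sup>+ y. Dfun fl C y * indicator Y y \<partial>lawF fl) + of_nat CARD('d) * ennreal L * emeasure (lawF fl) Y"
  proof -
    have ms: "sets (lawF fl) = sets lebesgue" by (simp add: lawF_def)
    have m1: "(\<lambda>y. Dfun fl C y * indicator Y y) \<in> borel_measurable (lawF fl)"
      unfolding measurable_cong_sets[OF ms refl] by (rule W'(3))
    have m2: "(\<lambda>y. of_nat CARD('d) * ennreal L * indicator Y y) \<in> borel_measurable (lawF fl)"
      unfolding measurable_cong_sets[OF ms refl] by simp
    have Ys: "Y \<in> sets (lawF fl)" using ms by simp
    show ?thesis unfolding g_def
      by (simp add: nn_integral_add[OF m1 m2] nn_integral_cmult_indicator[OF Ys])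
  qed
  also have "\<dots> \<le> (\<integral>\<^sup>+ y. Dfun fl C y * indicator Y y \<partial>lawF fl) + of_nat CARD('d) * ennreal L"
  proof -
    have "emeasure (lawF fl) Y = (\<integral>\<^sup>+ x. ennreal (fl x) * indicator Y x \<partial>lebesgue)"
      unfolding lawF_def by (simp add: emeasure_density)
    also have "\<dots> \<le> (\<integral>\<^sup>+ x. ennreal (fl x) \<partial>lebesgue)"
      by (intro nn_integral_mono) (auto split: split_indicator)
    also have "\<dots> = 1" by (rule int_fl)
    finally have "emeasure (lawF fl) Y \<le> 1" .
    then show ?thesis by (intro add_left_mono) (metis mult.right_neutral mult_left_mono zero_le)
  qed
  finally show ?thesis by (simp add: p_def fl_def L_def mult_left_mono)
qed

lemma logp_nonneg: "0 \<le> logp t" by (simp add: logp_def)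

lemma logp_2: "logp (2 / r) \<le> ln 2 + logp (1 / r)"
proof (cases "2 / r > 1")
  case True
  then have r0: "0 < r" by (metis divide_le_0_iff less_numeral_extra(1) not_le order_less_trans zero_le_numeral)
  have "ln (2 / r) = ln 2 + ln (1 / r)" using r0 by (simp add: ln_div)
  also have "ln (1 / r) \<le> logp (1 / r)" using r0 by (simp add: logp_def)
  finally have "ln (2 / r) \<le> ln 2 + logp (1 / r)" by simp
  moreover have "0 \<le> ln 2 + logp (1 / r)" using logp_nonneg[of "1/r"] by simp
  moreover have "0 < 2 / r" using True by linarith
  then have "logp (2 / r) = max (ln (2 / r)) 0" unfolding logp_def by (simp only: if_True)
  ultimately show ?thesis by simp
next
  case False
  then have "logp (2 / r) = 0" unfolding logp_def by (auto simp: max_def)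
  then show ?thesis using logp_nonneg[of "1/r"] by simp
qed

theorem mainTheorem12:
  fixes f :: "real ^ 'd \<Rightarrow> real"
    and Y :: "nat \<Rightarrow> (real ^ 'd) set" and r :: "nat \<Rightarrow> real"
    and C :: "nat \<Rightarrow> real ^ 'd \<Rightarrow> (real ^ 'd) set"
    and A :: "nat \<Rightarrow> nat \<Rightarrow> nat \<Rightarrow> (real ^ 'd) set" and h :: "nat \<Rightarrow> nat \<Rightarrow> real"
  assumes "is_density f"
    and "CSSA_wit f Y r C A h"
  shows "integrable lebesgue (\<lambda>y. f y * logp (f y))
    \<and> (\<integral>\<^sup>+ y. ennreal (f y * logp (f y)) \<partial>lebesgue)
          \<le> (\<Sum>l. if 1 \<le> l \<and> pY f (Y l) > 0 then
                ennreal (pY f (Y l)) *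
                  (\<integral>\<^sup>+ y. Dfun (frestr f (Y l)) (C l) y * indicator (Y l) y \<partial>lawF (frestr f (Y l)))
              else 0)
            + of_nat CARD('d) *
              (\<Sum>l. if 1 \<le> l \<and> pY f (Y l) > 0 then ennreal (pY f (Y l) * logp (2 / r l)) else 0)
    \<and> (\<Sum>l. if 1 \<le> l \<and> pY f (Y l) > 0 then
                ennreal (pY f (Y l)) *
                  (\<integral>\<^sup>+ y. Dfun (frestr f (Y l)) (C l) y * indicator (Y l) y \<partial>lawF (frestr f (Y l)))
              else 0)
            + of_nat CARD('d) *
              (\<Sum>l. if 1 \<le> l \<and> pY f (Y l) > 0 then ennreal (pY f (Y l) * logp (2 / r l)) else 0) < \<infinity>"
proof -
  note df = dens_facts[OF assms(1)]
  note fm[measurable] = df(1)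
  define T where "T l = (if 1 \<le> l \<and> pY f (Y l) > 0 then
                ennreal (pY f (Y l)) *
                  (\<integral>\<^sup>+ y. Dfun (frestr f (Y l)) (C l) y * indicator (Y l) y \<partial>lawF (frestr f (Y l)))
              else 0)" for l
  define S where "S l = (if 1 \<le> l \<and> pY f (Y l) > 0 then ennreal (pY f (Y l) * logp (2 / r l)) else 0)" for l
  define Q where "Q l = (if 1 \<le> l \<and> pY f (Y l) > 0 then ennreal (pY f (Y l) * logp (1 / r l)) else 0)" for l
  define P where "P l = (if 1 \<le> l \<and> pY f (Y l) > 0 then ennreal (pY f (Y l)) else 0)" for l
  define Y' where "Y' l = (if 1 \<le> l then Y l else {})" for l
  define G where "G y = ennreal (f y * logp (f y))" for y
  have CW: "(\<forall>l\<ge>1. Y l \<in> sets lebesgue)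
   \<and> disjoint_family_on Y {1..}
   \<and> (\<Union>l\<in>{1..}. Y l) = supp f
   \<and> (\<forall>l\<ge>1. pY f (Y l) > 0 \<longrightarrow> FSSA_wit (frestr f (Y l)) (r l) (C l) (A l) (h l))
   \<and> suminf T < \<infinity> \<and> suminf Q < \<infinity>"
    using assms(2) unfolding CSSA_wit_def T_def Q_def .
  then have Ym: "\<And>l. 1 \<le> l \<Longrightarrow> Y l \<in> sets lebesgue"
    and disj0: "disjoint_family_on Y {1..}"
    and UY: "(\<Union>l\<in>{1..}. Y l) = supp f"
    and FW: "\<And>l. 1 \<le> l \<Longrightarrow> pY f (Y l) > 0 \<Longrightarrow> FSSA_wit (frestr f (Y l)) (r l) (C l) (A l) (h l)"
    and Tfin: "suminf T < \<infinity>" and Qfin: "suminf Q < \<infinity>"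
    by blast+
  have Y'm[measurable]: "Y' l \<in> sets lebesgue" for l using Ym by (simp add: Y'_def)
  have disj: "disjoint_family Y'"
    using disj0 unfolding disjoint_family_on_def Y'_def by auto
  have UY': "(\<Union>l. Y' l) = supp f"
    using UY unfolding Y'_def by (auto split: if_splits)
  have Ysub: "1 \<le> l \<Longrightarrow> Y l \<subseteq> supp f" for l using UY by auto
  have supp_m[measurable]: "supp f \<in> sets lebesgue"
  proof -
    have "{x \<in> space lebesgue. 0 < f x} \<in> sets lebesgue" by measurable
    then show ?thesis unfolding supp_def by simp
  qed
  have flogm[measurable]: "(\<lambda>y. f y * logp (f y)) \<in> borel_measurable lebesgue" by measurable
  have Gm[measurable]: "G \<in> borel_measurable lebesgue" unfolding G_def by measurable
  have Gsum: "G y = (\<Sum>l. G y * indicator (Y' l) y)" for y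
  proof (cases "y \<in> supp f")
    case True
    then obtain l0 where l0: "y \<in> Y' l0" using UY' by blast
    have "G y * indicator (Y' l) y = (if l = l0 then G y else 0)" for l
      using l0 disj unfolding disjoint_family_on_def by (auto split: split_indicator)
    then have "(\<Sum>l. G y * indicator (Y' l) y) = (\<Sum>l. if l = l0 then G y else 0)" by simp
    also have "\<dots> = G y" by (rule sums_unique[symmetric]) (rule sums_single)
    finally show ?thesis by simp
  next
    case False
    then have "f y = 0" using df(2)[of y] by (simp add: supp_def)
    then have "G y = 0" by (simp add: G_def)
    moreover have "y \<notin> Y' l" for l using False UY' by blast
    ultimately show ?thesis by simp
  qed
  have step1: "integral\<^sup>N lebesgue G = (\<Sum>l. \<integral>\<^sup>+ y. G y * indicator (Y' l) y \<partial>lebesgue)"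
  proof -
    have "integral\<^sup>N lebesgue G = (\<integral>\<^sup>+ y. (\<Sum>l. G y * indicator (Y' l) y) \<partial>lebesgue)"
      by (intro nn_integral_cong) (rule Gsum)
    also have "\<dots> = (\<Sum>l. \<integral>\<^sup>+ y. G y * indicator (Y' l) y \<partial>lebesgue)"
      by (rule nn_integral_suminf) measurable
    finally show ?thesis .
  qed
  have step2: "(\<integral>\<^sup>+ y. G y * indicator (Y' l) y \<partial>lebesgue) \<le> T l + of_nat CARD('d) * S l" for l
  proof (cases "1 \<le> l \<and> pY f (Y l) > 0")
    case True
    then have l1: "1 \<le> l" and pp: "pY f (Y l) > 0" by auto
    have "(\<integral>\<^sup>+ y. G y * indicator (Y' l) y \<partial>lebesgue)
        \<le> ennreal (pY f (Y l)) * ((\<integral>\<^sup>+ y. Dfun (frestr f (Y l)) (C l) y * indicator (Y l) y \<partial>lawF (frestr f (Y l)))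
        + of_nat CARD('d) * ennreal (logp (2 / r l)))"
      using piece[OF assms(1) Ym[OF l1] Ysub[OF l1] pp FW[OF l1 pp]] l1
      unfolding G_def Y'_def by simp
    also have "\<dots> = T l + of_nat CARD('d) * S l"
    proof -
      have e: "ennreal (pY f (Y l) * logp (2 / r l)) = ennreal (pY f (Y l)) * ennreal (logp (2 / r l))"
        using pp logp_nonneg by (intro ennreal_mult) auto
      show ?thesis unfolding T_def S_def using True e
        by (simp add: distrib_left ac_simps)
    qed
    finally show ?thesis .
  next
    case False
    show ?thesis
    proof (cases "1 \<le> l")
      case False
      then show ?thesis by (simp add: Y'_def)
    next
      case True
      then have p0: "pY f (Y l) = 0" using \<open>\<not> (1 \<le> l \<and> pY f (Y l) > 0)\<close> emeasure_lawF(3)[OF assms(1) Ym[OF True]]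
        by linarith
      have Ylm[measurable]: "Y l \<in> sets lebesgue" by (rule Ym[OF True])
      have "(\<integral>\<^sup>+ x. ennreal (f x) * indicator (Y l) x \<partial>lebesgue) = emeasure (lawF f) (Y l)"
        unfolding lawF_def using Ym[OF True] by (simp add: emeasure_density)
      also have "\<dots> = 0" using emeasure_lawF(1)[OF assms(1) Ym[OF True]] p0 by simp
      finally have "AE x in lebesgue. ennreal (f x) * indicator (Y l) x = 0"
        by (subst (asm) nn_integral_0_iff_AE) measurable
      then have "AE x in lebesgue. G x * indicator (Y' l) x = 0"
      proof eventually_elim
        case (elim x)
        have f0: "ennreal (f x) = 0 \<Longrightarrow> f x = 0" using df(2)[of x] by (simp add: ennreal_eq_0_iff)
        show ?case using elim f0 by (auto simp: G_def Y'_def True split: split_indicator)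
      qed
      then have "(\<integral>\<^sup>+ y. G y * indicator (Y' l) y \<partial>lebesgue) = 0"
        by (subst nn_integral_0_iff_AE) measurable
      then show ?thesis by simp
    qed
  qed
  have bound: "integral\<^sup>N lebesgue G \<le> suminf T + of_nat CARD('d) * suminf S"
  proof -
    have "integral\<^sup>N lebesgue G \<le> (\<Sum>l. T l + of_nat CARD('d) * S l)"
      unfolding step1 using step2 by (rule suminf_le) simp_all
    also have "\<dots> = suminf T + of_nat CARD('d) * suminf S"
      by (simp add: suminf_add[symmetric])
    finally show ?thesis .
  qed
  have Pbound: "suminf P \<le> 1"
  proof -
    have ms: "sets (lawF f) = sets lebesgue" by (simp add: lawF_def)
    have Ple: "P l \<le> emeasure (lawF f) (Y' l)" for l
    proof (cases "1 \<le> l")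
      case True
      then show ?thesis using emeasure_lawF(1)[OF assms(1) Ym[OF True]] by (simp add: P_def Y'_def)
    qed (simp add: P_def)
    have "suminf P \<le> (\<Sum>l. emeasure (lawF f) (Y' l))" using Ple by (rule suminf_le) simp_all
    also have "\<dots> = emeasure (lawF f) (\<Union>l. Y' l)"
    proof (rule suminf_emeasure)
      show "range Y' \<subseteq> sets (lawF f)" unfolding ms by auto
    qed (rule disj)
    also have "\<dots> = ennreal (pY f (supp f))" unfolding UY' by (rule emeasure_lawF(1)[OF assms(1) supp_m])
    also have "\<dots> \<le> 1" using emeasure_lawF(2)[OF assms(1) supp_m] by simp
    finally show ?thesis .
  qed
  have Sfin: "suminf S < \<infinity>"
  proof -
    have Sle: "S l \<le> ennreal (ln 2) * P l + Q l" for l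
    proof (cases "1 \<le> l \<and> pY f (Y l) > 0")
      case True
      have "pY f (Y l) * logp (2 / r l) \<le> ln 2 * pY f (Y l) + pY f (Y l) * logp (1 / r l)"
        using logp_2[of "r l"] True mult_left_mono[OF logp_2[of "r l"], of "pY f (Y l)"]
        by (simp add: algebra_simps)
      then have "ennreal (pY f (Y l) * logp (2 / r l)) \<le> ennreal (ln 2 * pY f (Y l) + pY f (Y l) * logp (1 / r l))"
        by (rule ennreal_leI)
      also have "\<dots> = ennreal (ln 2) * ennreal (pY f (Y l)) + ennreal (pY f (Y l) * logp (1 / r l))"
        using True logp_nonneg[of "1 / r l"] by (simp add: ennreal_plus ennreal_mult)
      finally show ?thesis using True by (simp add: S_def P_def Q_def)
    qed (auto simp: S_def P_def Q_def)
    have "suminf S \<le> (\<Sum>l. ennreal (ln 2) * P l + Q l)" using Sle by (rule suminf_le) simp_all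
    also have "\<dots> = ennreal (ln 2) * suminf P + suminf Q"
      by (simp add: suminf_add[symmetric])
    also have "\<dots> \<le> ennreal (ln 2) * 1 + suminf Q"
      using Pbound by (intro add_right_mono mult_left_mono) auto
    also have "\<dots> < \<infinity>" using Qfin by (simp add: less_top)
    finally show ?thesis .
  qed
  have fin: "suminf T + of_nat CARD('d) * suminf S < \<infinity>"
    using Tfin Sfin by (simp add: ennreal_mult_less_top of_nat_less_top less_top)
  have integ: "integrable lebesgue (\<lambda>y. f y * logp (f y))"
  proof (rule integrableI_nonneg)
    show "AE x in lebesgue. 0 \<le> f x * logp (f x)" using df(2) logp_nonneg by simp
    show "(\<integral>\<^sup>+ x. ennreal (f x * logp (f x)) \<partial>lebesgue) < \<infinity>"
      using bound fin unfolding G_def by (metis le_less_trans)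
  qed measurable
  show ?thesis
    using integ bound fin unfolding G_def T_def S_def by (intro conjI)
qed

end
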